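(* Let $\psi:[t_0,\infty)\to(0,\infty)$ be continuous and non-increasing, such that $t\mapsto t\psi(t)$ is non-decreasing and $t\psi(t)<1$ for all $t\ge t_0$. Then there exists a unique continuous non-increasing function $r:[s_0,\infty)\to(0,\infty)$, where $s_0=\frac12\log t_0-\frac12\log\psi(t_0)$, such that $s\mapsto s+r(s)$ is non-decreasing and $$\psi(e^{s-r(s)})=e^{-s-r(s)}\quad\text{for all } s\ge s_0.$$ Conversely, given a continuous non-increasing function $r:[s_0,\infty)\to(0,\infty)$ such that $s\mapsto s+r(s)$ is non-decreasing, there exists a unique continuous non-increasing function $\psi:[t_0,\infty)\to(0,\infty)$ with $t_0=e^{s_0-r(s_0)}$ such that $t\mapsto t\psi(t)$ is non-decreasing, $t\psi(t)<1$ for all $t\ge t_0$, and $\psi(e^{s-r(s)})=e^{-s-r(s)}$ for all $s\ge s_0$. Furthermore, for such corresponding $\psi$ and $r$, if $\lim_{t\to\infty}t\psi(t)=1$ (equivalently $\lim_{s\to\infty}r(s)=0$), then the series $$\sum_n\frac{-(1-n\psi(n))\log(1-n\psi(n))}{n}$$ diverges if and only if the series $\sum_n r(n)\log\big(\frac{1}{r(n)}\big)$ diverges. *)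

theory Defs
  imports "HOL-Analysis.Analysis"
begin

text \<open>Admissible psi on the domain [t0, infinity) (functions are total; only values on the domain matter).\<close>
definition psi_adm :: "real \<Rightarrow> (real \<Rightarrow> real) \<Rightarrow> bool" where
  "psi_adm t0 \<psi> \<longleftrightarrow> t0 > 0 \<and> (\<forall>t\<ge>t0. \<psi> t > 0) \<and> continuous_on {t0..} \<psi> \<and>
     antimono_on {t0..} \<psi> \<and> mono_on {t0..} (\<lambda>t. t * \<psi> t) \<and> (\<forall>t\<ge>t0. t * \<psi> t < 1)"

definition r_adm :: "real \<Rightarrow> (real \<Rightarrow> real) \<Rightarrow> bool" where
  "r_adm s0 r \<longleftrightarrow> (\<forall>s\<ge>s0. r s > 0) \<and> continuous_on {s0..} r \<and>
     antimono_on {s0..} r \<and> mono_on {s0..} (\<lambda>s. s + r s)"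

definition corresp :: "real \<Rightarrow> (real \<Rightarrow> real) \<Rightarrow> real \<Rightarrow> (real \<Rightarrow> real) \<Rightarrow> bool" where
  "corresp t0 \<psi> s0 r \<longleftrightarrow>
     (\<forall>s\<ge>s0. t0 \<le> exp (s - r s) \<and> \<psi> (exp (s - r s)) = exp (- s - r s))"

end

theory Submission
  imports Defs "HOL-Real_Asymp.Real_Asymp"
begin

lemma inv_lemma:
  fixes f :: "real \<Rightarrow> real" and a :: real
  assumes cont: "continuous_on {a..} f"
    and smono: "\<And>x y. a \<le> x \<Longrightarrow> x < y \<Longrightarrow> f x < f y"
    and unb: "\<And>y. \<exists>x\<ge>a. y \<le> f x"
  obtains g where "\<And>y. f a \<le> y \<Longrightarrow> a \<le> g y \<and> f (g y) = y"
    "\<And>x. a \<le> x \<Longrightarrow> g (f x) = x"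
    "continuous_on {f a..} g"
    "\<And>y y'. f a \<le> y \<Longrightarrow> y \<le> y' \<Longrightarrow> g y \<le> g y'"
proof -
  have surj: "\<exists>x\<ge>a. f x = y" if "f a \<le> y" for y
  proof -
    obtain b where b: "b \<ge> a" "y \<le> f b" using unb by blast
    have "continuous_on {a..b} f" using continuous_on_subset[OF cont] by auto
    then show ?thesis using IVT'[of f a y b] b that by auto
  qed
  have inj: "x = x'" if "a \<le> x" "a \<le> x'" "f x = f x'" for x x'
    using smono[of x x'] smono[of x' x] that by (cases x x' rule: linorder_cases) auto
  define g where "g y = (SOME x. a \<le> x \<and> f x = y)" for y
  have g1: "a \<le> g y \<and> f (g y) = y" if "f a \<le> y" for y
    unfolding g_def by (rule someI_ex) (use surj[OF that] in auto)
  have g2: "g (f x) = x" if "a \<le> x" for x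
    using g1[of "f x"] inj[of "g (f x)" x] that smono[of a x] by (cases "a = x") force+
  have g3: "g y \<le> g y'" if "f a \<le> y" "y \<le> y'" for y y'
  proof (rule ccontr)
    assume "\<not> g y \<le> g y'"
    then have "f (g y') < f (g y)" using smono[of "g y'" "g y"] g1[of y'] that by auto
    then show False using g1[of y] g1[of y'] that by auto
  qed
  have g4: "continuous_on {f a..} g"
    unfolding continuous_on_eq_continuous_within
  proof (intro ballI)
    fix y assume y: "y \<in> {f a..}"
    obtain x where x: "x \<ge> a" "f x = y" using surj y by auto
    define b where "b = x + 1"
    have fb: "f b > y" using smono[of x b] x b_def by auto
    have cK: "continuous_on (f ` {a..b}) g"
      by (rule continuous_on_inv[OF continuous_on_subset[OF cont] compact_Icc]) (auto simp: g2)
    have "f ` {a..b} = {f a..f b}"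
    proof
      show "f ` {a..b} \<subseteq> {f a..f b}"
      proof
        fix z assume "z \<in> f ` {a..b}"
        then obtain w where w: "w \<in> {a..b}" "z = f w" by auto
        then have "f a \<le> f w" using smono[of a w] by (cases "a = w") force+
        moreover have "f w \<le> f b" using w smono[of w b] by (cases "w = b") force+
        ultimately show "z \<in> {f a..f b}" using w by auto
      qed
    next
      show "{f a..f b} \<subseteq> f ` {a..b}"
      proof
        fix z assume z: "z \<in> {f a..f b}"
        have "g z \<le> b" using g3[of z "f b"] g2[of b] z x b_def by auto
        then show "z \<in> f ` {a..b}" using g1[of z] z by (auto intro!: image_eqI[of _ _ "g z"])
      qed
    qed
    then have "continuous (at y within {f a..f b}) g"
      using cK y fb by (simp add: continuous_on_eq_continuous_within)
    moreover have "at y within {f a..} = at y within {f a..f b}"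
      by (rule at_within_nhd[of _ "{..<f b}"]) (use fb in auto)
    ultimately show "continuous (at y within {f a..}) g" by simp
  qed
  show ?thesis using that g1 g2 g3 g4 by blast
qed

lemma part1:
  assumes adm: "psi_adm t0 \<psi>"
  shows "let s0 = ln t0 / 2 - ln (\<psi> t0) / 2 in
             \<exists>r. r_adm s0 r \<and> corresp t0 \<psi> s0 r \<and>
               (\<forall>r'. r_adm s0 r' \<and> corresp t0 \<psi> s0 r' \<longrightarrow> (\<forall>s\<ge>s0. r' s = r s))"
proof -
  define s0 where "s0 = ln t0 / 2 - ln (\<psi> t0) / 2"
  have t0: "t0 > 0" and pos: "\<And>t. t \<ge> t0 \<Longrightarrow> \<psi> t > 0" and cont: "continuous_on {t0..} \<psi>"
    and anti: "\<And>t t'. t0 \<le> t \<Longrightarrow> t \<le> t' \<Longrightarrow> \<psi> t' \<le> \<psi> t"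
    and mon: "\<And>t t'. t0 \<le> t \<Longrightarrow> t \<le> t' \<Longrightarrow> t * \<psi> t \<le> t' * \<psi> t'"
    and lt1: "\<And>t. t \<ge> t0 \<Longrightarrow> t * \<psi> t < 1"
    using adm unfolding psi_adm_def monotone_on_def by auto
  define u0 where "u0 = ln t0"
  have eu0: "exp u0 = t0" using t0 u0_def by simp
  have ge: "exp u \<ge> t0" if "u \<ge> u0" for u using that eu0 by auto
  define \<phi> where "\<phi> u = - ln (\<psi> (exp u))" for u
  have \<phi>exp: "\<psi> (exp u) = exp (- \<phi> u)" if "u \<ge> u0" for u
    unfolding \<phi>_def using pos[OF ge[OF that]] by simp
  have \<phi>mono: "\<phi> u \<le> \<phi> u'" if "u0 \<le> u" "u \<le> u'" for u u'
  proof -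
    have "\<psi> (exp u') \<le> \<psi> (exp u)" using anti[of "exp u" "exp u'"] ge that by auto
    then show ?thesis unfolding \<phi>_def using pos ge that by auto
  qed
  have \<phi>gt: "\<phi> u > u" if "u0 \<le> u" for u
  proof -
    have "exp u * \<psi> (exp u) < 1" using lt1 ge that by auto
    then have "ln (exp u * \<psi> (exp u)) < 0" using pos ge that by (simp add: ln_less_zero_iff)
    then show ?thesis unfolding \<phi>_def using pos[OF ge[OF that]] by (simp add: ln_mult)
  qed
  have \<phi>anti: "\<phi> u' - u' \<le> \<phi> u - u" if "u0 \<le> u" "u \<le> u'" for u u'
  proof -
    have "exp u * \<psi> (exp u) \<le> exp u' * \<psi> (exp u')" using mon ge that by auto
    then have "ln (exp u * \<psi> (exp u)) \<le> ln (exp u' * \<psi> (exp u'))"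
      using pos ge that by (subst ln_le_cancel_iff) auto
    then show ?thesis unfolding \<phi>_def using pos[OF ge[OF that(1)]] pos[OF ge, of u'] that by (simp add: ln_mult)
  qed
  define S where "S u = (u + \<phi> u) / 2" for u
  have Scont: "continuous_on {u0..} S"
  proof -
    have "continuous_on {u0..} (\<lambda>u. \<psi> (exp u))"
      by (rule continuous_on_compose2[OF cont]) (auto intro!: continuous_intros ge)
    then have "continuous_on {u0..} (\<lambda>u. ln (\<psi> (exp u)))"
      using pos ge by (auto intro!: continuous_intros) (metis less_irrefl)
    then show ?thesis unfolding S_def \<phi>_def by (auto intro!: continuous_intros)
  qed
  have Smono: "S x < S y" if "u0 \<le> x" "x < y" for x y
    using \<phi>mono[of x y] that unfolding S_def by auto
  have Sunb: "\<exists>x\<ge>u0. y \<le> S x" for y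
  proof -
    define x where "x = max u0 (2 * y - \<phi> u0)"
    have "\<phi> u0 \<le> \<phi> x" using \<phi>mono[of u0 x] x_def by auto
    then show ?thesis using x_def unfolding S_def by (intro exI[of _ x]) auto
  qed
  have Su0: "S u0 = s0" unfolding S_def \<phi>_def s0_def using eu0 u0_def by simp
  obtain \<sigma> where \<sigma>1: "\<And>y. s0 \<le> y \<Longrightarrow> u0 \<le> \<sigma> y \<and> S (\<sigma> y) = y"
    and \<sigma>2: "\<And>x. u0 \<le> x \<Longrightarrow> \<sigma> (S x) = x"
    and \<sigma>3: "continuous_on {s0..} \<sigma>"
    and \<sigma>4: "\<And>y y'. s0 \<le> y \<Longrightarrow> y \<le> y' \<Longrightarrow> \<sigma> y \<le> \<sigma> y'"
    using inv_lemma[OF Scont Smono Sunb] Su0 by metis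
  define r where "r s = s - \<sigma> s" for s
  have rphi: "s + r s = \<phi> (\<sigma> s)" if "s0 \<le> s" for s
    using \<sigma>1[OF that] unfolding r_def S_def by auto
  have radm: "r_adm s0 r"
    unfolding r_adm_def monotone_on_def
  proof (intro conjI ballI impI allI)
    fix s assume "s0 \<le> s"
    then show "r s > 0" using \<sigma>1 \<phi>gt rphi unfolding r_def by fastforce
  next
    show "continuous_on {s0..} r" unfolding r_def by (auto intro!: continuous_intros \<sigma>3)
  next
    fix s s' assume "s \<in> {s0..}" "s' \<in> {s0..}" "s \<le> s'"
    then show "r s' \<le> r s" using \<phi>anti[of "\<sigma> s" "\<sigma> s'"] \<sigma>4[of s s'] \<sigma>1[of s] rphi[of s] rphi[of s'] 
      by (auto simp: r_def)
  next
    fix s s' assume "s \<in> {s0..}" "s' \<in> {s0..}" "s \<le> s'"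
    then show "s + r s \<le> s' + r s'" using \<phi>mono[of "\<sigma> s" "\<sigma> s'"] \<sigma>4[of s s'] \<sigma>1[of s] rphi[of s] rphi[of s'] 
      by auto
  qed
  have rcor: "corresp t0 \<psi> s0 r"
    unfolding corresp_def
  proof (intro allI impI conjI)
    fix s assume s: "s0 \<le> s"
    then show "t0 \<le> exp (s - r s)" using \<sigma>1 ge unfolding r_def by auto
    show "\<psi> (exp (s - r s)) = exp (- s - r s)"
      using \<phi>exp[of "\<sigma> s"] \<sigma>1[OF s] rphi[OF s] unfolding r_def by (auto simp: algebra_simps)
  qed
  have runiq: "\<forall>r'. r_adm s0 r' \<and> corresp t0 \<psi> s0 r' \<longrightarrow> (\<forall>s\<ge>s0. r' s = r s)"
  proof (intro allI impI)
    fix r' s assume h: "r_adm s0 r' \<and> corresp t0 \<psi> s0 r'" and s: "s0 \<le> s"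
    define u where "u = s - r' s"
    have "t0 \<le> exp u" "\<psi> (exp u) = exp (- s - r' s)" using h s unfolding corresp_def u_def by auto
    then have u: "u0 \<le> u" and "\<phi> u = s + r' s" using t0 unfolding u0_def \<phi>_def
      by (auto simp: ln_le_cancel_iff[symmetric])
    then have "S u = s" unfolding S_def u_def by auto
    then have "\<sigma> s = u" using \<sigma>2[OF u] by simp
    then show "r' s = r s" unfolding r_def u_def by simp
  qed
  show ?thesis unfolding Let_def s0_def[symmetric] using radm rcor runiq by blast
qed

lemma part2:
  assumes adm: "r_adm s0 r"
  shows "let t0 = exp (s0 - r s0) in
             \<exists>\<psi>. psi_adm t0 \<psi> \<and> corresp t0 \<psi> s0 r \<and>
               (\<forall>\<psi>'. psi_adm t0 \<psi>' \<and> corresp t0 \<psi>' s0 r \<longrightarrow> (\<forall>t\<ge>t0. \<psi>' t = \<psi> t))"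
proof -
  define t0 where "t0 = exp (s0 - r s0)"
  have pos: "\<And>s. s \<ge> s0 \<Longrightarrow> r s > 0" and cont: "continuous_on {s0..} r"
    and anti: "\<And>s s'. s0 \<le> s \<Longrightarrow> s \<le> s' \<Longrightarrow> r s' \<le> r s"
    and mon: "\<And>s s'. s0 \<le> s \<Longrightarrow> s \<le> s' \<Longrightarrow> s + r s \<le> s' + r s'"
    using adm unfolding r_adm_def monotone_on_def by auto
  define U where "U s = s - r s" for s
  define u0 where "u0 = U s0"
  have t0u0: "ln t0 = u0" "t0 = exp u0" "t0 > 0" unfolding t0_def u0_def U_def by auto
  have Ucont: "continuous_on {s0..} U" unfolding U_def by (auto intro!: continuous_intros cont)
  have Umono: "U x < U y" if "s0 \<le> x" "x < y" for x y
    using anti[of x y] that unfolding U_def by auto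
  have Uunb: "\<exists>x\<ge>s0. y \<le> U x" for y
  proof -
    define x where "x = max s0 (y + r s0)"
    have "r x \<le> r s0" using anti[of s0 x] x_def by auto
    then show ?thesis using x_def unfolding U_def by (intro exI[of _ x]) auto
  qed
  obtain \<sigma> where \<sigma>1: "\<And>y. u0 \<le> y \<Longrightarrow> s0 \<le> \<sigma> y \<and> U (\<sigma> y) = y"
    and \<sigma>2: "\<And>x. s0 \<le> x \<Longrightarrow> \<sigma> (U x) = x"
    and \<sigma>3: "continuous_on {u0..} \<sigma>"
    and \<sigma>4: "\<And>y y'. u0 \<le> y \<Longrightarrow> y \<le> y' \<Longrightarrow> \<sigma> y \<le> \<sigma> y'"
    using inv_lemma[OF Ucont Umono Uunb] u0_def by metis
  define \<psi> where "\<psi> t = exp (- (\<sigma> (ln t) + r (\<sigma> (ln t))))" for t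
  have lnge: "u0 \<le> ln t" if "t0 \<le> t" for t using that t0u0 by (metis exp_gt_zero exp_le_cancel_iff exp_ln less_le_trans)
  have lnmono: "ln t \<le> ln t'" if "t0 \<le> t" "t \<le> t'" for t t'
    using that t0u0(3) by (subst ln_le_cancel_iff) auto
  have tpsi: "t * \<psi> t = exp (- 2 * r (\<sigma> (ln t)))" if "t0 \<le> t" for t
  proof -
    have "t > 0" using that t0u0(3) by linarith
    then have "t = exp (U (\<sigma> (ln t)))" using \<sigma>1[OF lnge[OF that]] by auto
    also have "\<dots> * \<psi> t = exp (- 2 * r (\<sigma> (ln t)))"
      unfolding \<psi>_def U_def by (simp add: mult_exp_exp)
    finally show ?thesis .
  qed
  have padm: "psi_adm t0 \<psi>"
    unfolding psi_adm_def monotone_on_def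
  proof (intro conjI ballI impI allI)
    show "t0 > 0" by (fact t0u0)
  next
    fix t :: real show "\<psi> t > 0" unfolding \<psi>_def by simp
  next
    have c1: "continuous_on {t0..} (\<lambda>t. \<sigma> (ln t))"
      by (rule continuous_on_compose2[OF \<sigma>3]) (use t0u0 lnge in \<open>auto intro!: continuous_intros\<close>)
    have c2: "continuous_on {t0..} (\<lambda>t. r (\<sigma> (ln t)))"
      by (rule continuous_on_compose2[OF cont c1]) (use \<sigma>1 lnge in auto)
    show "continuous_on {t0..} \<psi>" unfolding \<psi>_def by (auto intro!: continuous_intros c1 c2)
  next
    fix t t' assume h: "t \<in> {t0..}" "t' \<in> {t0..}" "t \<le> t'"
    then have "\<sigma> (ln t) \<le> \<sigma> (ln t')" using \<sigma>4[OF lnge lnmono] by auto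
    then have "\<sigma> (ln t) + r (\<sigma> (ln t)) \<le> \<sigma> (ln t') + r (\<sigma> (ln t'))"
      using mon \<sigma>1 lnge h by auto
    then show "\<psi> t' \<le> \<psi> t" unfolding \<psi>_def by simp
  next
    fix t t' assume h: "t \<in> {t0..}" "t' \<in> {t0..}" "t \<le> t'"
    then have "\<sigma> (ln t) \<le> \<sigma> (ln t')" using \<sigma>4[OF lnge lnmono] by auto
    then have "r (\<sigma> (ln t')) \<le> r (\<sigma> (ln t))"
      using anti \<sigma>1 lnge h by auto
    then show "t * \<psi> t \<le> t' * \<psi> t'" using tpsi h by auto
  next
    fix t :: real assume h: "t0 \<le> t"
    then show "t * \<psi> t < 1" using tpsi[OF h] pos[of "\<sigma> (ln t)"] \<sigma>1 lnge by auto
  qed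
  have pcor: "corresp t0 \<psi> s0 r"
    unfolding corresp_def
  proof (intro allI impI conjI)
    fix s assume s: "s0 \<le> s"
    have "U s0 \<le> U s" using Umono[of s0 s] s by (cases "s = s0") auto
    then show "t0 \<le> exp (s - r s)" using t0u0 u0_def unfolding U_def by auto
    then show "\<psi> (exp (s - r s)) = exp (- s - r s)"
      using \<sigma>2[OF s] unfolding \<psi>_def U_def by (simp add: algebra_simps)
  qed
  have puniq: "\<forall>\<psi>'. psi_adm t0 \<psi>' \<and> corresp t0 \<psi>' s0 r \<longrightarrow> (\<forall>t\<ge>t0. \<psi>' t = \<psi> t)"
  proof (intro allI impI)
    fix \<psi>' t assume h: "psi_adm t0 \<psi>' \<and> corresp t0 \<psi>' s0 r" and t: "t0 \<le> t"
    define s where "s = \<sigma> (ln t)"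
    have "t > 0" using t t0u0(3) by linarith
    then have s: "s0 \<le> s" "exp (s - r s) = t" using \<sigma>1[OF lnge[OF t]] unfolding s_def U_def by auto
    then have "\<psi>' t = exp (- s - r s)" using h unfolding corresp_def by metis
    then show "\<psi>' t = \<psi> t" unfolding \<psi>_def s_def by (simp add: algebra_simps)
  qed
  show ?thesis unfolding Let_def t0_def[symmetric] using padm pcor puniq by blast
qed

lemma G_mono:
  fixes x y :: real
  assumes "0 < x" "x \<le> y" "y \<le> exp (-1)"
  shows "x * ln (1/x) \<le> y * ln (1/y)"
proof -
  have eq: "z * ln (1/z) = - (z * ln z)" if "z > 0" for z :: real
    using that by (simp add: ln_div)
  have "- (x * ln x) \<le> - (y * ln y)"
  proof (rule DERIV_nonneg_imp_increasing_open[OF assms(2)])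
    fix z assume z: "x < z" "z < y"
    have "z > 0" using z assms by auto
    moreover have "ln z \<le> ln (exp (-1))" using z assms by (subst ln_le_cancel_iff) auto
    ultimately have "z > 0" "ln z \<le> -1" by auto
    then show "\<exists>d. ((\<lambda>z. - (z * ln z)) has_real_derivative d) (at z) \<and> 0 \<le> d"
      by (intro exI[of _ "- (ln z + 1)"]) (auto intro!: derivative_eq_intros)
  next
    show "continuous_on {x..y} (\<lambda>z. - (z * ln z))" using assms
      by (intro continuous_intros) auto
  qed
  then show ?thesis using assms eq by simp
qed

lemma G_nonneg:
  fixes x :: real
  assumes "0 < x" "x \<le> 1"
  shows "0 \<le> x * ln (1/x)"
  using assms by simp

lemma sum_div2:
  fixes f :: "nat \<Rightarrow> real"
  assumes nn: "\<And>n. 0 \<le> f n" and sf: "summable f"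
  shows "summable (\<lambda>k. f (k div 2))"
proof (rule summableI_nonneg_bounded)
  show "0 \<le> f (k div 2)" for k using nn by simp
  have eq: "(\<Sum>k<2*n. f (k div 2)) = 2 * (\<Sum>m<n. f m)" for n
  proof (induction n)
    case (Suc n)
    have "2 * Suc n = Suc (Suc (2 * n))" by simp
    then have "(\<Sum>k<2 * Suc n. f (k div 2)) = (\<Sum>k<2*n. f (k div 2)) + f (2 * n div 2) + f (Suc (2 * n) div 2)"
      by (simp only: sum.lessThan_Suc)
    also have "\<dots> = (\<Sum>k<2*n. f (k div 2)) + 2 * f n" by simp
    finally show ?case using Suc.IH by simp
  qed simp
  fix n
  have "(\<Sum>k<n. f (k div 2)) \<le> (\<Sum>k<2*n. f (k div 2))"
    by (rule sum_mono2) (auto simp: nn)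
  also have "\<dots> = 2 * (\<Sum>m<n. f m)" by (rule eq)
  also have "\<dots> \<le> 2 * suminf f" using sum_le_suminf[OF sf, of "{..<n}"] nn by auto
  finally show "(\<Sum>k<n. f (k div 2)) \<le> 2 * suminf f" .
qed

lemma ev_bounds:
  fixes F G :: "real \<Rightarrow> real"
  assumes lim: "((\<lambda>x. F x / G x) \<longlongrightarrow> 2) L" and gp: "eventually (\<lambda>x. G x > 0) L"
  shows "eventually (\<lambda>x. G x \<le> F x \<and> F x \<le> 3 * G x) L"
proof -
  have e1: "eventually (\<lambda>x. F x / G x > 1) L" using order_tendstoD(1)[OF lim, of 1] by simp
  have e2: "eventually (\<lambda>x. F x / G x < 3) L" using order_tendstoD(2)[OF lim, of 3] by simp
  show ?thesis using e1 e2 gp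
  proof eventually_elim
    case (elim x)
    then show ?case by (simp add: pos_less_divide_eq pos_divide_less_eq)
  qed
qed

lemma FG_bounds:
  "eventually (\<lambda>x::real. x * ln (1/x) \<le> - (1 - exp (- 2 * x)) * ln (1 - exp (- 2 * x)) \<and>
      - (1 - exp (- 2 * x)) * ln (1 - exp (- 2 * x)) \<le> 3 * (x * ln (1/x))) (at_right 0)"
proof (rule ev_bounds[where F = "\<lambda>x. - (1 - exp (- 2 * x)) * ln (1 - exp (- 2 * x))" and G = "\<lambda>x. x * ln (1/x)"])
  show "((\<lambda>x::real. (- (1 - exp (- 2 * x)) * ln (1 - exp (- 2 * x))) / (x * ln (1/x))) \<longlongrightarrow> 2) (at_right 0)"
    by real_asymp
  show "eventually (\<lambda>x::real. x * ln (1/x) > 0) (at_right 0)"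
    by real_asymp
qed

lemma part3:
  assumes padm: "psi_adm t0 \<psi>" and radm: "r_adm s0 r" and cor: "corresp t0 \<psi> s0 r"
    and lim: "((\<lambda>t. t * \<psi> t) \<longlongrightarrow> 1) at_top"
  shows "summable (\<lambda>n::nat. - (1 - real n * \<psi> (real n)) * ln (1 - real n * \<psi> (real n)) / real n)
     \<longleftrightarrow> summable (\<lambda>n::nat. r (real n) * ln (1 / r (real n)))"
proof -
  have t0: "t0 > 0" and ppos: "\<And>t. t \<ge> t0 \<Longrightarrow> \<psi> t > 0"
    and pmon: "\<And>t t'. t0 \<le> t \<Longrightarrow> t \<le> t' \<Longrightarrow> t * \<psi> t \<le> t' * \<psi> t'"
    and lt1: "\<And>t. t \<ge> t0 \<Longrightarrow> t * \<psi> t < 1"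
    using padm unfolding psi_adm_def monotone_on_def by auto
  have pos: "\<And>s. s \<ge> s0 \<Longrightarrow> r s > 0" and cont: "continuous_on {s0..} r"
    and anti: "\<And>s s'. s0 \<le> s \<Longrightarrow> s \<le> s' \<Longrightarrow> r s' \<le> r s"
    using radm unfolding r_adm_def monotone_on_def by auto
  define U where "U s = s - r s" for s
  define u0 where "u0 = U s0"
  have Ucont: "continuous_on {s0..} U" unfolding U_def by (auto intro!: continuous_intros cont)
  have Umono: "U x < U y" if "s0 \<le> x" "x < y" for x y
    using anti[of x y] that unfolding U_def by auto
  have Ulow: "s - r s0 \<le> U s" if "s0 \<le> s" for s using anti[of s0 s] that unfolding U_def by auto
  have Uunb: "\<exists>x\<ge>s0. y \<le> U x" for y
  proof -
    define x where "x = max s0 (y + r s0)"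
    show ?thesis using x_def Ulow[of x] by (intro exI[of _ x]) auto
  qed
  obtain \<sigma> where \<sigma>1: "\<And>y. u0 \<le> y \<Longrightarrow> s0 \<le> \<sigma> y \<and> U (\<sigma> y) = y"
    using inv_lemma[OF Ucont Umono Uunb] u0_def by metis
  have key: "exp (U s) * \<psi> (exp (U s)) = exp (- 2 * r s)" if "s0 \<le> s" for s
    using cor that unfolding corresp_def U_def by (simp add: mult_exp_exp)
  have r0: "(r \<longlongrightarrow> 0) at_top"
  proof -
    have "filterlim (\<lambda>s. s - r s0) at_top at_top" by real_asymp
    moreover have "eventually (\<lambda>s. s - r s0 \<le> U s) at_top"
      using eventually_ge_at_top[of s0] by (rule eventually_mono) (rule Ulow)
    ultimately have "filterlim U at_top at_top"
      by (rule filterlim_at_top_mono)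
    then have "filterlim (\<lambda>s. exp (U s)) at_top at_top"
      by (rule filterlim_compose[OF exp_at_top])
    then have "((\<lambda>s. exp (U s) * \<psi> (exp (U s))) \<longlongrightarrow> 1) at_top"
      by (rule filterlim_compose[OF lim])
    moreover have "eventually (\<lambda>s. exp (U s) * \<psi> (exp (U s)) = exp (- 2 * r s)) at_top"
      using eventually_ge_at_top[of s0] by (rule eventually_mono) (rule key)
    ultimately have "((\<lambda>s. exp (- 2 * r s)) \<longlongrightarrow> 1) at_top"
      using tendsto_cong by fastforce
    then have "((\<lambda>s. ln (exp (- 2 * r s))) \<longlongrightarrow> ln 1) at_top"
      by (rule tendsto_ln) simp
    then have "((\<lambda>s. (- 2 * r s) * (- 1/2)) \<longlongrightarrow> 0 * (-1/2)) at_top"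
      by (intro tendsto_mult) auto
    then show ?thesis by simp
  qed
  obtain S1 where S1: "S1 \<ge> s0" "\<And>s. s \<ge> S1 \<Longrightarrow> r s \<le> exp (-1)"
  proof -
    have "eventually (\<lambda>s. r s < exp (-1)) at_top" using order_tendstoD(2)[OF r0] by simp
    then obtain N where "\<And>s. s \<ge> N \<Longrightarrow> r s < exp (-1)" by (auto simp: eventually_at_top_linorder)
    then show ?thesis using that[of "max s0 N"] by fastforce
  qed
  define G where "G x = x * ln (1 / x)" for x :: real
  have amono: "G (r s') \<le> G (r s)" if "S1 \<le> s" "s \<le> s'" for s s'
    unfolding G_def by (rule G_mono) (use that pos anti S1 in auto)
  have anonneg: "G (r s) \<ge> 0" if "S1 \<le> s" for s
  proof -
    have "r s \<le> exp (-1)" using S1 that by auto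
    also have "exp (-1::real) \<le> 1" by simp
    finally show ?thesis unfolding G_def by (intro G_nonneg) (use that pos S1 in auto)
  qed
  have sig_gt: "y < \<sigma> y" "s0 \<le> \<sigma> y" if "u0 \<le> y" for y
    using \<sigma>1[OF that] pos[of "\<sigma> y"] unfolding U_def by auto
  have sig_le: "\<sigma> y \<le> y + r s0" if "u0 \<le> y" for y
    using \<sigma>1[OF that] anti[of s0 "\<sigma> y"] unfolding U_def by auto
  define w where "w t = 1 - t * \<psi> t" for t
  define bR where "bR t = - (1 - t * \<psi> t) * ln (1 - t * \<psi> t) / t" for t :: real
  have wpos: "0 < w t" if "t0 \<le> t" for t using lt1[OF that] unfolding w_def by simp
  have wanti: "w t' \<le> w t" if "t0 \<le> t" "t \<le> t'" for t t' using pmon[OF that] unfolding w_def by simp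
  have bRG: "bR t = G (w t) / t" if "t0 \<le> t" for t
  proof -
    have "ln (1 / w t) = - ln (w t)" using wpos[OF that] by (simp add: ln_div)
    then show ?thesis unfolding bR_def G_def w_def by (simp add: algebra_simps minus_divide_left)
  qed
  obtain T where T: "T \<ge> t0" "T \<ge> 1" "\<And>t. t \<ge> T \<Longrightarrow> w t \<le> exp (-1)"
  proof -
    have "eventually (\<lambda>t. t * \<psi> t > 1 - exp (-1)) at_top" using order_tendstoD(1)[OF lim] by simp
    then obtain N where "\<And>t. t \<ge> N \<Longrightarrow> t * \<psi> t > 1 - exp (-1)" by (auto simp: eventually_at_top_linorder)
    then show ?thesis using that[of "max t0 (max 1 N)"] unfolding w_def by fastforce
  qed
  have Gw_nn: "0 \<le> G (w t)" if "T \<le> t" for t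
  proof -
    have "w t \<le> exp (-1)" using T that by auto
    also have "exp (-1::real) \<le> 1" by simp
    finally show ?thesis unfolding G_def by (intro G_nonneg) (use that T wpos in auto)
  qed
  have bRmono: "bR t' \<le> bR t" if "T \<le> t" "t \<le> t'" for t t'
  proof -
    have "G (w t') \<le> G (w t)" unfolding G_def
      by (rule G_mono) (use that T wpos wanti in auto)
    then have "G (w t') / t' \<le> G (w t) / t"
      by (intro frac_le Gw_nn) (use that T in auto)
    then show ?thesis using bRG that T by auto
  qed
  have bRnn: "0 \<le> bR t" if "T \<le> t" for t
    using bRG[of t] Gw_nn[OF that] that T by auto
  define N where "N = nat \<lceil>T\<rceil>"
  have NT: "T \<le> real N" unfolding N_def by linarith
  define b' where "b' n = bR (real (max n N))" for n :: nat
  have sum_b: "summable (\<lambda>n. bR (real n)) \<longleftrightarrow> summable b'"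
    by (rule summable_cong) (use eventually_ge_at_top[of N] in \<open>rule eventually_mono, simp add: b'_def\<close>)
  have cond: "summable b' \<longleftrightarrow> summable (\<lambda>n. 2^n * b' (2^n))"
  proof (rule condensation_test)
    fix m :: nat
    show "b' (Suc m) \<le> b' m" unfolding b'_def by (rule bRmono) (use NT in auto)
  next
    fix n show "0 \<le> b' n" unfolding b'_def by (rule bRnn) (use NT in auto)
  qed
  define c where "c k = r (\<sigma> (real k * ln 2))" for k :: nat
  define F where "F x = - (1 - exp (- 2 * x)) * ln (1 - exp (- 2 * x))" for x :: real
  have lnk: "filterlim (\<lambda>k::nat. real k * ln 2) at_top sequentially" by real_asymp
  have evk: "eventually (\<lambda>k. X \<le> real k * ln 2) sequentially" for X
    using lnk by (simp add: filterlim_at_top)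
  have cond_eq: "eventually (\<lambda>k. 2^k * b' (2^k) = F (c k)) sequentially"
    using evk[of u0] eventually_ge_at_top[of N]
  proof eventually_elim
    case (elim k)
    define s where "s = \<sigma> (real k * ln 2)"
    have s: "s0 \<le> s" "U s = real k * ln 2" using \<sigma>1[OF elim(1)] unfolding s_def by auto
    have "k < 2 ^ k" by (rule less_exp)
    then have mx: "max (2^k) N = 2^k" using elim(2) by (intro max_absorb1) linarith
    have e2: "exp (U s) = 2 ^ k" using s(2) by (simp add: exp_of_nat_mult)
    have "(2::real) ^ k * \<psi> (2 ^ k) = exp (- 2 * r s)" using key[OF s(1)] e2 by simp
    then show ?case unfolding b'_def mx bR_def F_def c_def s_def[symmetric] by simp
  qed
  have sig_top: "filterlim (\<lambda>k::nat. \<sigma> (real k * ln 2)) at_top sequentially"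
    by (rule filterlim_at_top_mono[OF lnk]) (use evk[of u0] in \<open>rule eventually_mono, use sig_gt in force\<close>)
  have evs: "eventually (\<lambda>k. X \<le> \<sigma> (real k * ln 2)) sequentially" for X
    using sig_top by (simp add: filterlim_at_top)
  have cfilt: "filterlim c (at_right 0) sequentially"
    unfolding filterlim_at
  proof
    show "eventually (\<lambda>k. c k \<in> {0<..} \<and> c k \<noteq> 0) sequentially"
      using evs[of s0] by (rule eventually_mono) (use pos c_def in force)
    show "(c \<longlongrightarrow> 0) sequentially" unfolding c_def
      by (rule filterlim_compose[OF r0 sig_top])
  qed
  have FGc: "eventually (\<lambda>k. G (c k) \<le> F (c k) \<and> F (c k) \<le> 3 * G (c k)) sequentially"
    using eventually_compose_filterlim[OF FG_bounds cfilt] unfolding G_def F_def .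
  have Gc_nn: "eventually (\<lambda>k. 0 \<le> G (c k)) sequentially"
    using evs[of S1] by (rule eventually_mono) (use anonneg c_def in force)
  have FG_equiv: "summable (\<lambda>k. F (c k)) \<longleftrightarrow> summable (\<lambda>k. G (c k))"
  proof
    assume sF: "summable (\<lambda>k. F (c k))"
    have ev: "eventually (\<lambda>k. norm (G (c k)) \<le> F (c k)) sequentially"
      using eventually_conj[OF FGc Gc_nn] by (rule eventually_mono) (metis abs_of_nonneg real_norm_def)
    show "summable (\<lambda>k. G (c k))" by (rule summable_comparison_test_ev[OF ev sF])
  next
    assume "summable (\<lambda>k. G (c k))"
    then have s3: "summable (\<lambda>k. 3 * G (c k))" by (rule summable_mult)
    have ev: "eventually (\<lambda>k. norm (F (c k)) \<le> 3 * G (c k)) sequentially"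
      using eventually_conj[OF FGc Gc_nn] by (rule eventually_mono) (metis abs_of_nonneg real_norm_def order_trans)
    show "summable (\<lambda>k. F (c k))" by (rule summable_comparison_test_ev[OF ev s3])
  qed
  have ln2: "ln (2::real) \<le> 1" "1/2 \<le> ln (2::real)"
    using ln_le_minus_one[of "2::real"] ln2_ge_two_thirds by auto
  have Ga_equiv: "summable (\<lambda>k. G (c k)) \<longleftrightarrow> summable (\<lambda>n. G (r (real n)))"
  proof
    assume sG: "summable (\<lambda>k. G (c k))"
    define M where "M = nat \<lceil>r s0\<rceil>"
    have "eventually (\<lambda>k. norm (G (r (real (k + M)))) \<le> G (c k)) sequentially"
      using evk[of u0] evs[of S1]
    proof eventually_elim
      case (elim k)
      have "\<sigma> (real k * ln 2) \<le> real k * ln 2 + r s0" by (rule sig_le[OF elim(1)])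
      also have "\<dots> \<le> real (k + M)"
      proof -
        have "real k * ln 2 \<le> real k" using ln2(1) by (simp add: mult_left_le)
        moreover have "r s0 \<le> real M" unfolding M_def by linarith
        ultimately show ?thesis by simp
      qed
      finally have le: "\<sigma> (real k * ln 2) \<le> real (k + M)" .
      then have "G (r (real (k + M))) \<le> G (c k)" unfolding c_def by (rule amono[OF elim(2)])
      moreover have "0 \<le> G (r (real (k + M)))" by (rule anonneg) (use le elim(2) in linarith)
      ultimately show ?case by simp
    qed
    then have "summable (\<lambda>k. G (r (real (k + M))))" using sG by (rule summable_comparison_test_ev)
    then show "summable (\<lambda>n. G (r (real n)))" using summable_iff_shift[of "\<lambda>n. G (r (real n))" M] by simp
  next
    assume sa: "summable (\<lambda>n. G (r (real n)))"
    define N2 where "N2 = nat \<lceil>S1\<rceil>"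
    have N2: "S1 \<le> real N2" unfolding N2_def by linarith
    define a' where "a' n = G (r (real (max n N2)))" for n :: nat
    have a'nn: "0 \<le> a' n" for n unfolding a'_def by (rule anonneg) (use N2 in auto)
    have "eventually (\<lambda>n. a' n = G (r (real n))) sequentially"
      using eventually_ge_at_top[of N2] by (rule eventually_mono) (simp add: a'_def)
    then have "summable a'" using sa by (simp add: summable_cong)
    then have sa2: "summable (\<lambda>k. a' (k div 2))" by (rule sum_div2[OF a'nn])
    have "eventually (\<lambda>k. norm (G (c k)) \<le> a' (k div 2)) sequentially"
      using evk[of u0] eventually_ge_at_top[of "2 * N2"] Gc_nn
    proof eventually_elim
      case (elim k)
      have mx: "max (k div 2) N2 = k div 2" using elim(2) by auto
      have "real (k div 2) \<le> real k / 2" by linarith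
      also have "\<dots> \<le> real k * ln 2" using mult_left_mono[OF ln2(2), of "real k"] by simp
      also have "\<dots> \<le> \<sigma> (real k * ln 2)" using sig_gt[OF elim(1)] by simp
      finally have le: "real (k div 2) \<le> \<sigma> (real k * ln 2)" .
      have "N2 \<le> k div 2" using elim(2) by auto
      then have "S1 \<le> real (k div 2)" using N2 by linarith
      then have "G (c k) \<le> a' (k div 2)" unfolding c_def a'_def mx by (rule amono[OF _ le])
      then show ?case using elim(3) by simp
    qed
    then show "summable (\<lambda>k. G (c k))" using sa2 by (rule summable_comparison_test_ev)
  qed
  have "summable (\<lambda>n. bR (real n)) \<longleftrightarrow> summable (\<lambda>n. G (r (real n)))"
    using sum_b cond summable_cong[OF cond_eq] FG_equiv Ga_equiv by simp
  then show ?thesis unfolding bR_def G_def .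
qed

theorem lemma4p1:
  shows "(\<forall>t0 \<psi>. psi_adm t0 \<psi> \<longrightarrow>
           (let s0 = ln t0 / 2 - ln (\<psi> t0) / 2 in
             \<exists>r. r_adm s0 r \<and> corresp t0 \<psi> s0 r \<and>
               (\<forall>r'. r_adm s0 r' \<and> corresp t0 \<psi> s0 r' \<longrightarrow> (\<forall>s\<ge>s0. r' s = r s))))
       \<and> (\<forall>s0 r. r_adm s0 r \<longrightarrow>
           (let t0 = exp (s0 - r s0) in
             \<exists>\<psi>. psi_adm t0 \<psi> \<and> corresp t0 \<psi> s0 r \<and>
               (\<forall>\<psi>'. psi_adm t0 \<psi>' \<and> corresp t0 \<psi>' s0 r \<longrightarrow> (\<forall>t\<ge>t0. \<psi>' t = \<psi> t))))
       \<and> (\<forall>t0 \<psi> r. psi_adm t0 \<psi> \<longrightarrow>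
           r_adm (ln t0 / 2 - ln (\<psi> t0) / 2) r \<longrightarrow>
           corresp t0 \<psi> (ln t0 / 2 - ln (\<psi> t0) / 2) r \<longrightarrow>
           ((\<lambda>t. t * \<psi> t) \<longlongrightarrow> 1) at_top \<longrightarrow>
           (\<not> summable (\<lambda>n::nat. - (1 - real n * \<psi> (real n)) * ln (1 - real n * \<psi> (real n)) / real n)
             \<longleftrightarrow> \<not> summable (\<lambda>n::nat. r (real n) * ln (1 / r (real n)))))"
proof -
  have A: "\<forall>t0 \<psi>. psi_adm t0 \<psi> \<longrightarrow>
           (let s0 = ln t0 / 2 - ln (\<psi> t0) / 2 in
             \<exists>r. r_adm s0 r \<and> corresp t0 \<psi> s0 r \<and>
               (\<forall>r'. r_adm s0 r' \<and> corresp t0 \<psi> s0 r' \<longrightarrow> (\<forall>s\<ge>s0. r' s = r s)))"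
    using part1 by blast
  have B: "\<forall>s0 r. r_adm s0 r \<longrightarrow>
           (let t0 = exp (s0 - r s0) in
             \<exists>\<psi>. psi_adm t0 \<psi> \<and> corresp t0 \<psi> s0 r \<and>
               (\<forall>\<psi>'. psi_adm t0 \<psi>' \<and> corresp t0 \<psi>' s0 r \<longrightarrow> (\<forall>t\<ge>t0. \<psi>' t = \<psi> t)))"
    using part2 by blast
  have C: "\<forall>t0 \<psi> r. psi_adm t0 \<psi> \<longrightarrow>
           r_adm (ln t0 / 2 - ln (\<psi> t0) / 2) r \<longrightarrow>
           corresp t0 \<psi> (ln t0 / 2 - ln (\<psi> t0) / 2) r \<longrightarrow>
           ((\<lambda>t. t * \<psi> t) \<longlongrightarrow> 1) at_top \<longrightarrow>
           (\<not> summable (\<lambda>n::nat. - (1 - real n * \<psi> (real n)) * ln (1 - real n * \<psi> (real n)) / real n)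
             \<longleftrightarrow> \<not> summable (\<lambda>n::nat. r (real n) * ln (1 / r (real n))))"
  proof (intro allI impI)
    fix t0 \<psi> r
    assume a: "psi_adm t0 \<psi>" "r_adm (ln t0 / 2 - ln (\<psi> t0) / 2) r"
      "corresp t0 \<psi> (ln t0 / 2 - ln (\<psi> t0) / 2) r" "((\<lambda>t. t * \<psi> t) \<longlongrightarrow> 1) at_top"
    show "(\<not> summable (\<lambda>n::nat. - (1 - real n * \<psi> (real n)) * ln (1 - real n * \<psi> (real n)) / real n)
             \<longleftrightarrow> \<not> summable (\<lambda>n::nat. r (real n) * ln (1 / r (real n))))"
      using part3[OF a] by simp
  qed
  show ?thesis using A B C by blast
qed

end
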